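(* For every $b\in\mathbb N$, every $\mathfrak a\in I_K$ and every $m\in\mathbb Z$ one has \[ G^b(\mathfrak a,m,0)=\frac{N_{bD}(\mathfrak a,m)}{D}. \]
   Context: Let $K$ be a real quadratic number field whose discriminant $D$ is odd (so $D>1$, $D\equiv 1 \pmod 4$ and $D$ is squarefree). Let $\mathcal O_K$ be its ring of integers, $x\mapsto x'$ the nontrivial automorphism of $K$, $N(x)=xx'$ and $\mathrm{tr}(x)=x+x'$. Let $I_K$ be the group of nonzero fractional ideals of $K$. For $\mathfrak a\in I_K$ let $N(\mathfrak a)\in\mathbb Q_{>0}$ denote its absolute norm; it is multiplicative and $N(x\mathcal O_K)=|N(x)|$. Let $\mathfrak d=\sqrt D\,\mathcal O_K$ be the different. Put $e(x)=e^{2\pi i x}$. For $b\in\mathbb N$, $\mathfrak a\in I_K$ and $m\in\mathbb Z$ define \[ G^b(\mathfrak a,m,0)=\#\Big\{\lambda\in \mathfrak a\mathfrak d^{-1}/b\mathfrak a : \tfrac{N(\lambda)}{N(\mathfrak a)}\equiv -\tfrac{m}{D}\pmod{b\mathbb Z}\Big\}, \] where the congruence means that the difference of the two rational numbers lies in $b\mathbb Z$. Further define \[ R_b(\mathfrak a,m)=\Big\{\lambda\in\mathfrak a/b\mathfrak a : \tfrac{N(\lambda)}{N(\mathfrak a)}\equiv m\pmod b\Big\},\qquad N_b(\mathfrak a,m)=\#R_b(\mathfrak a,m) \] (for $\lambda\in\mathfrak a$ the number $N(\lambda)/N(\mathfrak a)$ is an integer whose class mod $b$ depends only on $\lambda$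 mod $b\mathfrak a$). *)

theory Defs
  imports Complex_Main "HOL-Library.Product_Plus" "HOL-Computational_Algebra.Squarefree"
begin

text \<open>The real quadratic field K = Q(sqrt D) is modelled as rat \<times> rat, the pair (x, y)
  standing for x + y * sqrt D.  Addition and zero are componentwise (Product_Plus).\<close>

type_synonym qelt = "rat \<times> rat"

definition kmul :: "int \<Rightarrow> qelt \<Rightarrow> qelt \<Rightarrow> qelt" where
  "kmul D u v = (fst u * fst v + of_int D * snd u * snd v, fst u * snd v + snd u * fst v)"

definition kscale :: "rat \<Rightarrow> qelt \<Rightarrow> qelt" where
  "kscale c u = (c * fst u, c * snd u)"

definition kconj :: "qelt \<Rightarrow> qelt" where
  "kconj u = (fst u, - snd u)"

definition knorm :: "int \<Rightarrow> qelt \<Rightarrow> rat" where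
  "knorm D u = fst (kmul D u (kconj u))"

definition ktr :: "qelt \<Rightarrow> rat" where
  "ktr u = fst (u + kconj u)"

text \<open>Ring of integers: elements whose characteristic polynomial X^2 - tr(x) X + N(x)
  has integer coefficients (i.e. the algebraic integers of K).\<close>
definition OK :: "int \<Rightarrow> qelt set" where
  "OK D = {u. ktr u \<in> \<int> \<and> knorm D u \<in> \<int>}"

definition frac_ideal :: "int \<Rightarrow> qelt set \<Rightarrow> bool" where
  "frac_ideal D A \<longleftrightarrow> 0 \<in> A \<and> A \<noteq> {0}
     \<and> (\<forall>u\<in>A. \<forall>v\<in>A. u + v \<in> A)
     \<and> (\<forall>r\<in>OK D. \<forall>u\<in>A. kmul D r u \<in> A)
     \<and> (\<exists>d::nat. d > 0 \<and> kscale (of_nat d) ` A \<subseteq> OK D)"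

definition ideal_mult :: "int \<Rightarrow> qelt set \<Rightarrow> qelt set \<Rightarrow> qelt set" where
  "ideal_mult D A B = {x. \<exists>(n::nat) f g. (\<forall>i<n. f i \<in> A \<and> g i \<in> B)
                               \<and> x = (\<Sum>i<n. kmul D (f i) (g i))}"

definition cosets :: "qelt set \<Rightarrow> qelt set \<Rightarrow> qelt set set" where
  "cosets A B = (\<lambda>x. (\<lambda>y. x + y) ` B) ` A"

definition ideal_norm :: "int \<Rightarrow> qelt set \<Rightarrow> rat" where
  "ideal_norm D A = (let d = (LEAST d::nat. d > 0 \<and> kscale (of_nat d) ` A \<subseteq> OK D) in
      of_nat (card (cosets (OK D) (kscale (of_nat d) ` A))) / of_nat d ^ 2)"

definition different :: "int \<Rightarrow> qelt set" where
  "different D = (\<lambda>u. kmul D (0, 1) u) ` OK D"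

definition inv_different :: "int \<Rightarrow> qelt set" where
  "inv_different D = {x. \<forall>y\<in>different D. kmul D x y \<in> OK D}"

definition rat_cong :: "rat \<Rightarrow> rat \<Rightarrow> int \<Rightarrow> bool" where
  "rat_cong q r b \<longleftrightarrow> (\<exists>k::int. q - r = of_int b * of_int k)"

definition G_sum :: "int \<Rightarrow> nat \<Rightarrow> qelt set \<Rightarrow> int \<Rightarrow> nat" where
  "G_sum D b A m = card ((\<lambda>x. (\<lambda>y. x + y) ` (kscale (of_nat b) ` A)) `
      {l \<in> ideal_mult D A (inv_different D).
          rat_cong (knorm D l / ideal_norm D A) (- of_int m / of_int D) (int b)})"

definition N_count :: "int \<Rightarrow> nat \<Rightarrow> qelt set \<Rightarrow> int \<Rightarrow> nat" where
  "N_count D b A m = card ((\<lambda>x. (\<lambda>y. x + y) ` (kscale (of_nat b) ` A)) `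
      {l \<in> A. rat_cong (knorm D l / ideal_norm D A) (of_int m) (int b)})"

end

theory Submission
  imports Defs
begin


lemma sqfree_rat_int:
  fixes c :: int and q :: rat
  assumes sq: "squarefree c" and h: "of_int c * q^2 \<in> \<int>"
  shows "q \<in> \<int>"
proof -
  obtain p r where qr: "quotient_of q = (p, r)" by (cases "quotient_of q") auto
  have r0: "r > 0" using quotient_of_denom_pos[OF qr] .
  have cop: "coprime p r" using quotient_of_coprime[OF qr] .
  have qeq: "q = of_int p / of_int r" using quotient_of_div[OF qr] .
  from h obtain j where j: "of_int c * q^2 = of_int j" by (auto elim: Ints_cases)
  have "of_int c * of_int p ^ 2 = (of_int j * of_int r ^ 2 :: rat)"
    using j r0 unfolding qeq by (simp add: field_simps power2_eq_square)
  hence e: "c * p^2 = j * r^2" by (metis of_int_eq_iff of_int_mult of_int_power)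
  hence "r^2 dvd c * p^2" by simp
  moreover have "coprime (r^2) (p^2)" using cop by (simp add: coprime_commute)
  ultimately have "r^2 dvd c" using coprime_dvd_mult_left_iff by blast
  hence "is_unit r" using sq unfolding squarefree_def by blast
  hence "r = 1" using r0 by simp
  thus ?thesis using qeq by simp
qed



lemma knorm_eq: "knorm D u = fst u ^ 2 - of_int D * snd u ^ 2"
  by (simp add: knorm_def kmul_def kconj_def power2_eq_square)
lemma ktr_eq: "ktr u = 2 * fst u"
  by (simp add: ktr_def kconj_def)

lemma OK_iff:
  assumes D4: "D mod 4 = 1" and sq: "squarefree D"
  shows "u \<in> OK D \<longleftrightarrow> (\<exists>a b::int. u = (of_int a + of_int b / 2, of_int b / 2))"
proof
  assume "u \<in> OK D"
  then obtain p n where p: "2 * fst u = of_int p" and n: "fst u ^ 2 - of_int D * snd u ^ 2 = of_int n"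
    unfolding OK_def knorm_eq ktr_eq by (auto elim!: Ints_cases)
  have fu: "fst u = of_int p / 2" using p by simp
  have "of_int D * (2 * snd u)^2 = (2 * fst u)^2 - 4 * (fst u ^ 2 - of_int D * snd u ^ 2)"
    by (simp add: power2_eq_square algebra_simps)
  also have "\<dots> = of_int (p^2 - 4*n)" unfolding n p by (simp add: fu power2_eq_square)
  finally have "of_int D * (2 * snd u)^2 \<in> \<int>" by simp
  hence "2 * snd u \<in> \<int>" by (rule sqfree_rat_int[OF sq])
  then obtain q where q: "2 * snd u = of_int q" by (auto elim: Ints_cases)
  have su: "snd u = of_int q / 2" using q by simp
  obtain k where k: "D = 4*k+1" using D4 by (metis div_mult_mod_eq add.commute mult.commute)
  have "(of_int (p^2 - q^2) :: rat) = 4 * (fst u ^ 2 - of_int D * snd u ^ 2) + 4 * of_int k * of_int q ^2"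
    unfolding fu su k by (simp add: power2_eq_square field_simps)
  also have "\<dots> = of_int (4 * (n + k*q^2))" unfolding n by simp
  finally have "p^2 - q^2 = 4 * (n + k*q^2)" by (simp only: of_int_eq_iff)
  hence "even ((p - q) * (p + q))" by (simp add: power2_eq_square algebra_simps)
  hence "even (p - q)" by auto
  then obtain a where a: "p - q = 2 * a" by blast
  have "u = (of_int a + of_int q / 2, of_int q / 2)"
  proof -
    have "of_int p = (of_int (2*a + q) :: rat)" using a by (simp add: algebra_simps)
    thus ?thesis using fu su by (cases u) (simp add: field_simps)
  qed
  thus "\<exists>a b::int. u = (of_int a + of_int b / 2, of_int b / 2)" by blast
next
  assume "\<exists>a b::int. u = (of_int a + of_int b / 2, of_int b / 2)"
  then obtain a b :: int where u: "u = (of_int a + of_int b / 2, of_int b / 2)" by blast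
  obtain k where k: "D = 4*k+1" using D4 by (metis div_mult_mod_eq add.commute mult.commute)
  have "ktr u = of_int (2*a+b)" by (simp add: ktr_eq u)
  moreover have "knorm D u = of_int (a^2 + a*b - k*b^2)"
    by (simp add: knorm_eq u k power2_eq_square field_simps)
  ultimately show "u \<in> OK D" unfolding OK_def by simp
qed



definition sgrp :: "'a::ab_group_add set \<Rightarrow> bool" where
  "sgrp H \<longleftrightarrow> 0 \<in> H \<and> (\<forall>x\<in>H. \<forall>y\<in>H. x + y \<in> H) \<and> (\<forall>x\<in>H. - x \<in> H)"

lemma sgrp_diff: "sgrp H \<Longrightarrow> x \<in> H \<Longrightarrow> y \<in> H \<Longrightarrow> x - y \<in> H"
  unfolding sgrp_def by (metis diff_conv_add_uminus)

lemma coset_eq_iff: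
  fixes u v :: "'a::ab_group_add"
  assumes H: "sgrp H"
  shows "(\<lambda>y. u + y) ` H = (\<lambda>y. v + y) ` H \<longleftrightarrow> u - v \<in> H"
proof
  assume e: "(\<lambda>y. u + y) ` H = (\<lambda>y. v + y) ` H"
  have "u + 0 \<in> (\<lambda>y. v + y) ` H" using H e unfolding sgrp_def by blast
  then obtain h where "h \<in> H" "u = v + h" by auto
  thus "u - v \<in> H" by simp
next
  assume d: "u - v \<in> H"
  show "(\<lambda>y. u + y) ` H = (\<lambda>y. v + y) ` H"
  proof (intro set_eqI iffI)
    fix z assume "z \<in> (\<lambda>y. u + y) ` H"
    then obtain h where h: "h \<in> H" "z = u + h" by auto
    have "(u - v) + h \<in> H" using H d h unfolding sgrp_def by blast
    moreover have "z = v + ((u - v) + h)" using h by simp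
    ultimately show "z \<in> (\<lambda>y. v + y) ` H" by blast
  next
    fix z assume "z \<in> (\<lambda>y. v + y) ` H"
    then obtain h where h: "h \<in> H" "z = v + h" by auto
    have "h - (u - v) \<in> H" using H d h by (simp add: sgrp_diff)
    moreover have "z = u + (h - (u - v))" using h by simp
    ultimately show "z \<in> (\<lambda>y. u + y) ` H" by blast
  qed
qed

lemma card_fibers:
  assumes img: "f ` X = Y" and fib: "\<And>y. y \<in> Y \<Longrightarrow> card {x\<in>X. f x = y} = c"
  shows "card X = c * card Y"
proof (cases "finite Y")
  case False
  have "infinite X"
  proof
    assume "finite X" hence "finite (f ` X)" by (rule finite_imageI)
    thus False using False img by simp
  qed
  thus ?thesis using False by simp
next
  case True
  show ?thesis
  proof (cases "\<forall>y\<in>Y. finite {x\<in>X. f x = y}")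
    case True2: True
    have XU: "X = (\<Union>y\<in>Y. {x\<in>X. f x = y})" using img by auto
    have "card (\<Union>y\<in>Y. {x\<in>X. f x = y}) = (\<Sum>y\<in>Y. card {x\<in>X. f x = y})"
      by (rule card_UN_disjoint) (use True True2 in auto)
    hence "card X = (\<Sum>y\<in>Y. card {x\<in>X. f x = y})" by (simp only: XU[symmetric])
    also have "\<dots> = c * card Y" using fib by simp
    finally show ?thesis .
  next
    case False
    then obtain y where y: "y \<in> Y" "infinite {x\<in>X. f x = y}" by blast
    have "c = 0" using fib[OF y(1)] y(2) by simp
    moreover have "infinite X"
    proof
      assume "finite X"
      moreover have "{x\<in>X. f x = y} \<subseteq> X" by blast
      ultimately show False using y(2) finite_subset by blast
    qed
    ultimately show ?thesis by simp
  qed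
qed

definition ssum :: "'a::ab_group_add set \<Rightarrow> 'a set \<Rightarrow> 'a set" where
  "ssum C G = (\<Union>x\<in>C. (\<lambda>z. x + z) ` G)"

lemma ssum_coset:
  fixes x :: "'a::ab_group_add"
  assumes G: "sgrp G" and HG: "H \<subseteq> G" and H0: "0 \<in> H"
  shows "ssum ((\<lambda>y. x + y) ` H) G = (\<lambda>y. x + y) ` G"
proof (intro set_eqI iffI)
  fix z assume "z \<in> ssum ((\<lambda>y. x + y) ` H) G"
  then obtain h g where "h \<in> H" "g \<in> G" "z = (x + h) + g" unfolding ssum_def by auto
  moreover hence "h + g \<in> G" using G HG unfolding sgrp_def by blast
  ultimately show "z \<in> (\<lambda>y. x + y) ` G" by (auto simp: add.assoc)
next
  fix z assume "z \<in> (\<lambda>y. x + y) ` G"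
  then obtain g where "g \<in> G" "z = (x + 0) + g" by auto
  thus "z \<in> ssum ((\<lambda>y. x + y) ` H) G" unfolding ssum_def using H0 by blast
qed

lemma inj_translate_set: "inj (\<lambda>S. (\<lambda>z. (y::'a::ab_group_add) + z) ` S)"
proof (rule injI)
  fix S T assume e: "(\<lambda>z. y + z) ` S = (\<lambda>z. y + z) ` T"
  have "S = (\<lambda>z. -y + z) ` ((\<lambda>z. y + z) ` S)" by (auto simp: image_image)
  also have "\<dots> = T" unfolding e by (auto simp: image_image)
  finally show "S = T" .
qed

lemma gen_fiber:
  fixes P :: "qelt set"
  assumes G: "sgrp G" and H: "sgrp H" and HG: "H \<subseteq> G"
    and Pc: "\<And>x g. x \<in> P \<Longrightarrow> g \<in> G \<Longrightarrow> x + g \<in> P"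
  shows "card ((\<lambda>x. (\<lambda>y. x + y) ` H) ` P)
       = card (cosets G H) * card ((\<lambda>x. (\<lambda>y. x + y) ` G) ` P)"
proof (rule card_fibers[where f = "\<lambda>C. ssum C G"])
  have H0: "0 \<in> H" using H unfolding sgrp_def by blast
  show "(\<lambda>C. ssum C G) ` (\<lambda>x. (\<lambda>y. x + y) ` H) ` P = (\<lambda>x. (\<lambda>y. x + y) ` G) ` P"
    unfolding image_image using ssum_coset[OF G HG H0] by simp
  fix Y assume "Y \<in> (\<lambda>x. (\<lambda>y. x + y) ` G) ` P"
  then obtain y where y: "y \<in> P" "Y = (\<lambda>z. y + z) ` G" by auto
  have eqF: "{C \<in> (\<lambda>x. (\<lambda>y. x + y) ` H) ` P. ssum C G = Y}
      = (\<lambda>S. (\<lambda>z. y + z) ` S) ` cosets G H"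
  proof (intro set_eqI iffI)
    fix C assume "C \<in> {C \<in> (\<lambda>x. (\<lambda>y. x + y) ` H) ` P. ssum C G = Y}"
    then obtain x where x: "x \<in> P" "C = (\<lambda>z. x + z) ` H" "ssum C G = Y" by auto
    hence "(\<lambda>z. x + z) ` G = (\<lambda>z. y + z) ` G" using ssum_coset[OF G HG H0] y by simp
    hence xy: "x - y \<in> G" using coset_eq_iff[OF G] by blast
    have "C = (\<lambda>z. y + z) ` ((\<lambda>z. (x - y) + z) ` H)" using x by (auto simp: image_image)
    thus "C \<in> (\<lambda>S. (\<lambda>z. y + z) ` S) ` cosets G H" unfolding cosets_def using xy by blast
  next
    fix C assume "C \<in> (\<lambda>S. (\<lambda>z. y + z) ` S) ` cosets G H"
    then obtain g where g: "g \<in> G" "C = (\<lambda>z. y + z) ` ((\<lambda>z. g + z) ` H)" unfolding cosets_def by auto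
    have C: "C = (\<lambda>z. (y + g) + z) ` H" using g by (auto simp: image_image add.assoc)
    have "y + g \<in> P" using Pc y g by blast
    moreover have "ssum C G = Y"
    proof -
      have "ssum C G = (\<lambda>z. (y + g) + z) ` G" unfolding C by (rule ssum_coset[OF G HG H0])
      also have "\<dots> = (\<lambda>z. y + z) ` G" using coset_eq_iff[OF G, of "y+g" y] g(1) by simp
      finally show ?thesis using y(2) by simp
    qed
    ultimately show "C \<in> {C \<in> (\<lambda>x. (\<lambda>y. x + y) ` H) ` P. ssum C G = Y}" using C by blast
  qed
  show "card {C \<in> (\<lambda>x. (\<lambda>y. x + y) ` H) ` P. ssum C G = Y} = card (cosets G H)"
    unfolding eqF by (rule card_image[OF inj_on_subset[OF inj_translate_set subset_UNIV]])
qed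

lemma tower:
  fixes G :: "qelt set"
  assumes G: "sgrp G" and G': "sgrp G'" and H: "sgrp H" and HG': "H \<subseteq> G'" and G'G: "G' \<subseteq> G"
  shows "card (cosets G H) = card (cosets G' H) * card (cosets G G')"
proof -
  have "\<And>x g. x \<in> G \<Longrightarrow> g \<in> G' \<Longrightarrow> x + g \<in> G"
  proof -
    fix x g assume "x \<in> G" "g \<in> G'"
    moreover have "\<forall>x\<in>G. \<forall>y\<in>G. x + y \<in> G" using G unfolding sgrp_def by blast
    ultimately show "x + g \<in> G" using G'G by blast
  qed
  from gen_fiber[OF G' H HG' this] show ?thesis unfolding cosets_def[of G H] cosets_def[of G G'] .
qed



definition lc :: "qelt \<Rightarrow> qelt \<Rightarrow> int \<Rightarrow> int \<Rightarrow> qelt" where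
  "lc e1 e2 s t = kscale (of_int s) e1 + kscale (of_int t) e2"

definition lat :: "qelt \<Rightarrow> qelt \<Rightarrow> qelt set" where
  "lat e1 e2 = {lc e1 e2 s t | s t. True}"

definition det2 :: "qelt \<Rightarrow> qelt \<Rightarrow> rat" where
  "det2 e1 e2 = fst e1 * snd e2 - snd e1 * fst e2"

lemma lc_eq: "lc e1 e2 s t = (of_int s * fst e1 + of_int t * fst e2, of_int s * snd e1 + of_int t * snd e2)"
  by (simp add: lc_def kscale_def)

lemma lc_add: "lc e1 e2 s t + lc e1 e2 s' t' = lc e1 e2 (s + s') (t + t')"
  by (simp add: lc_eq algebra_simps)
lemma lc_diff: "lc e1 e2 s t - lc e1 e2 s' t' = lc e1 e2 (s - s') (t - t')"
  by (simp add: lc_eq algebra_simps)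
lemma lc_uminus: "- lc e1 e2 s t = lc e1 e2 (- s) (- t)"
  by (simp add: lc_eq algebra_simps)
lemma lc_zero: "lc e1 e2 0 0 = 0"
  by (simp add: lc_eq zero_prod_def)

lemma lat_mem[simp]: "lc e1 e2 s t \<in> lat e1 e2"
  unfolding lat_def by blast

lemma lat_sgrp: "sgrp (lat e1 e2)"
proof -
  have "0 \<in> lat e1 e2" using lat_mem[of e1 e2 0 0] by (simp only: lc_zero)
  moreover have "\<forall>x\<in>lat e1 e2. \<forall>y\<in>lat e1 e2. x + y \<in> lat e1 e2"
  proof (intro ballI)
    fix x y assume "x \<in> lat e1 e2" "y \<in> lat e1 e2"
    then obtain s t s' t' where "x = lc e1 e2 s t" "y = lc e1 e2 s' t'" unfolding lat_def by blast
    thus "x + y \<in> lat e1 e2" by (simp add: lc_add)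
  qed
  moreover have "\<forall>x\<in>lat e1 e2. - x \<in> lat e1 e2"
  proof (intro ballI)
    fix x assume "x \<in> lat e1 e2"
    then obtain s t where "x = lc e1 e2 s t" unfolding lat_def by blast
    thus "- x \<in> lat e1 e2" by (simp add: lc_uminus)
  qed
  ultimately show ?thesis unfolding sgrp_def by blast
qed

lemma lc_inj:
  assumes d: "det2 e1 e2 \<noteq> 0" and e: "lc e1 e2 s t = lc e1 e2 s' t'"
  shows "s = s' \<and> t = t'"
proof -
  let ?x = "of_int (s - s') :: rat" and ?y = "of_int (t - t') :: rat"
  have "lc e1 e2 (s - s') (t - t') = 0" using e lc_diff[of e1 e2 s t s' t'] by simp
  hence 1: "?x * fst e1 + ?y * fst e2 = 0" and 2: "?x * snd e1 + ?y * snd e2 = 0"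
    unfolding lc_eq by (simp_all add: zero_prod_def)
  have "?x * det2 e1 e2 = snd e2 * (?x * fst e1 + ?y * fst e2) - fst e2 * (?x * snd e1 + ?y * snd e2)"
    unfolding det2_def by (simp add: algebra_simps)
  hence "?x = 0" using 1 2 d by simp
  moreover have "?y * det2 e1 e2 = fst e1 * (?x * snd e1 + ?y * snd e2) - snd e1 * (?x * fst e1 + ?y * fst e2)"
    unfolding det2_def by (simp add: algebra_simps)
  hence "?y = 0" using 1 2 d by simp
  ultimately show ?thesis by simp
qed

lemma lat_tri:
  "lat (kscale (of_int a) e1) (kscale (of_int c) e1 + kscale (of_int g) e2)
   = {lc e1 e2 (r * a + q * c) (q * g) | r q. True}"
proof -
  have "\<And>r q. lc (kscale (of_int a) e1) (kscale (of_int c) e1 + kscale (of_int g) e2) r q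
         = lc e1 e2 (r * a + q * c) (q * g)"
    by (simp add: lc_eq kscale_def algebra_simps)
  thus ?thesis unfolding lat_def by simp
qed

lemma small_mult_zero:
  fixes q g :: int
  assumes "g > 0" "0 \<le> y" "y < g" "0 \<le> y'" "y' < g" "y - y' = q * g"
  shows "q = 0"
proof (rule ccontr)
  assume "q \<noteq> 0"
  hence "q \<ge> 1 \<or> q \<le> -1" by linarith
  thus False
  proof
    assume "q \<ge> 1" hence "1 * g \<le> q * g" using assms(1) by (intro mult_right_mono) auto
    thus False using assms by linarith
  next
    assume "q \<le> -1" hence "1 * g \<le> (- q) * g" using assms(1) by (intro mult_right_mono) auto
    thus False using assms by linarith
  qed
qed

lemma tri_index:
  assumes d: "det2 e1 e2 \<noteq> 0" and a: "a > 0" and g: "g > 0"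
  shows "card (cosets (lat e1 e2) (lat (kscale (of_int a) e1) (kscale (of_int c) e1 + kscale (of_int g) e2)))
         = nat (a * g)"
proof -
  define H where "H = lat (kscale (of_int a) e1) (kscale (of_int c) e1 + kscale (of_int g) e2)"
  have H: "H = {lc e1 e2 (r * a + q * c) (q * g) | r q. True}" unfolding H_def by (rule lat_tri)
  have Hs: "sgrp H" unfolding H_def by (rule lat_sgrp)
  define \<phi> where "\<phi> = (\<lambda>p::int\<times>int. (\<lambda>z. lc e1 e2 (fst p) (snd p) + z) ` H)"
  define R where "R = {0..<a} \<times> {0..<g}"
  have memH: "lc e1 e2 s t \<in> H \<longleftrightarrow> (\<exists>r q. s = r * a + q * c \<and> t = q * g)" for s t
  proof
    assume "lc e1 e2 s t \<in> H"
    then obtain r q where "lc e1 e2 s t = lc e1 e2 (r * a + q * c) (q * g)" unfolding H by blast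
    thus "\<exists>r q. s = r * a + q * c \<and> t = q * g" using lc_inj[OF d] by blast
  qed (auto simp: H)
  have "inj_on \<phi> R"
  proof (rule inj_onI)
    fix p p' assume p: "p \<in> R" and p': "p' \<in> R" and e: "\<phi> p = \<phi> p'"
    hence "lc e1 e2 (fst p) (snd p) - lc e1 e2 (fst p') (snd p') \<in> H"
      unfolding \<phi>_def using coset_eq_iff[OF Hs] by blast
    then obtain r q where rq: "fst p - fst p' = r * a + q * c" "snd p - snd p' = q * g"
      unfolding lc_diff memH by blast
    have "q = 0" by (rule small_mult_zero[OF g _ _ _ _ rq(2)]) (use p p' in \<open>auto simp: R_def\<close>)
    hence "fst p - fst p' = r * a" using rq by simp
    moreover have "r = 0" by (rule small_mult_zero[OF a _ _ _ _ calculation]) (use p p' in \<open>auto simp: R_def\<close>)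
    ultimately show "p = p'" using rq \<open>q = 0\<close> by (simp add: prod_eq_iff)
  qed
  moreover have "\<phi> ` R = cosets (lat e1 e2) H"
  proof (intro set_eqI iffI)
    fix C assume "C \<in> \<phi> ` R"
    then obtain p where "C = \<phi> p" by blast
    thus "C \<in> cosets (lat e1 e2) H" unfolding \<phi>_def cosets_def by simp
  next
    fix C assume "C \<in> cosets (lat e1 e2) H"
    then obtain s t where C: "C = (\<lambda>z. lc e1 e2 s t + z) ` H" unfolding cosets_def lat_def by blast
    define q where "q = t div g"
    define y where "y = t mod g"
    define r where "r = (s - q * c) div a"
    define x where "x = (s - q * c) mod a"
    have ty: "t = q * g + y" unfolding q_def y_def by simp
    have sx: "s - q * c = r * a + x" unfolding r_def x_def by simp
    have R: "(x, y) \<in> R" unfolding R_def x_def y_def using a g by simp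
    have "lc e1 e2 s t - lc e1 e2 x y \<in> H" unfolding lc_diff memH
      by (rule exI[of _ r], rule exI[of _ q]) (use ty sx in \<open>simp add: algebra_simps\<close>)
    hence "C = \<phi> (x, y)" unfolding C \<phi>_def using coset_eq_iff[OF Hs] by simp
    thus "C \<in> \<phi> ` R" using R by blast
  qed
  ultimately have "card (cosets (lat e1 e2) H) = card R" by (metis card_image)
  also have "\<dots> = nat (a * g)" unfolding R_def using a g by (simp add: card_cartesian_product nat_mult_distrib)
  finally show ?thesis unfolding H_def .
qed



abbreviation one :: qelt where "one \<equiv> (1, 0)"
abbreviation om :: qelt where "om \<equiv> (1/2, 1/2)"

lemma det_one_om: "det2 one om \<noteq> 0" by (simp add: det2_def)

lemma lc_oo: "lc one om u v = (of_int u + of_int v / 2, of_int v / 2)"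
  by (simp add: lc_eq)

locale qf =
  fixes D :: int
  assumes D1: "D > 1" and D4: "D mod 4 = 1" and sq: "squarefree D"
begin

definition k :: int where "k = D div 4"
lemma Dk: "D = 4 * k + 1"
proof -
  have "D = 4 * (D div 4) + D mod 4" by simp
  thus ?thesis unfolding k_def using D4 by simp
qed

lemma Dk_rat: "(of_int D :: rat) = 4 * of_int k + 1"
  using Dk by (metis of_int_1 of_int_add of_int_mult of_int_numeral)

lemma OK_lat: "OK D = lat one om"
  unfolding lat_def using OK_iff[OF D4 sq] by (auto simp: lc_oo)

lemma mul_lc: "kmul D (lc one om a b) (lc one om c d) = lc one om (a*c + k*b*d) (a*d + b*c + b*d)"
  unfolding kmul_def lc_oo Dk_rat by (simp add: field_simps)

lemma conj_lc: "kconj (lc one om a b) = lc one om (a + b) (- b)"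
  unfolding kconj_def lc_oo by (simp add: field_simps)

lemma kmul_comm: "kmul D x y = kmul D y x"
  unfolding kmul_def by (simp add: algebra_simps)
lemma kmul_assoc: "kmul D (kmul D x y) z = kmul D x (kmul D y z)"
  unfolding kmul_def by (simp add: algebra_simps)
lemma kmul_add: "kmul D x (y + z) = kmul D x y + kmul D x z"
  unfolding kmul_def by (simp add: algebra_simps)
lemma kmul_add_left: "kmul D (y + z) x = kmul D y x + kmul D z x"
  unfolding kmul_def by (simp add: algebra_simps)
lemma kmul_scale: "kmul D (kscale s x) y = kscale s (kmul D x y)"
  unfolding kmul_def kscale_def by (simp add: algebra_simps)
lemma kmul_scale2: "kmul D x (kscale s y) = kscale s (kmul D x y)"
  unfolding kmul_def kscale_def by (simp add: algebra_simps)
lemma kmul_one: "kmul D one x = x"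
  unfolding kmul_def by simp
lemma kconj_mul: "kconj (kmul D x y) = kmul D (kconj x) (kconj y)"
  unfolding kmul_def kconj_def by (simp add: algebra_simps)
lemma kmul_conj_self: "kmul D x (kconj x) = (knorm D x, 0)"
  unfolding kmul_def kconj_def knorm_def by (simp add: algebra_simps)

lemma OK_mul: assumes "x \<in> OK D" "y \<in> OK D" shows "kmul D x y \<in> OK D"
proof -
  obtain a b c d where "x = lc one om a b" "y = lc one om c d" using assms unfolding OK_lat lat_def by blast
  thus ?thesis unfolding OK_lat by (simp add: mul_lc)
qed
lemma OK_conj: assumes "x \<in> OK D" shows "kconj x \<in> OK D"
proof -
  obtain a b where "x = lc one om a b" using assms unfolding OK_lat lat_def by blast
  thus ?thesis unfolding OK_lat by (simp add: conj_lc)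
qed
lemma OK_lc[simp]: "lc one om a b \<in> OK D"
  unfolding OK_lat by simp

lemma norm_nonzero:
  assumes "x \<noteq> 0" shows "knorm D x \<noteq> 0"
proof
  assume n: "knorm D x = 0"
  obtain p q where x: "x = (p, q)" by (cases x)
  have e: "p^2 = of_int D * q^2" using n unfolding knorm_eq x by simp
  have "q \<noteq> 0"
  proof
    assume "q = 0" thus False using e x assms by (simp add: zero_prod_def)
  qed
  hence "(p / q)^2 = of_int D" using e by (simp add: power_divide)
  hence "of_int 1 * (p/q)^2 \<in> \<int>" by simp
  hence "p / q \<in> \<int>" by (rule sqfree_rat_int[OF squarefree_1])
  then obtain r where r: "p / q = of_int r" by (auto elim: Ints_cases)
  have "of_int (r^2) = (of_int D :: rat)" using \<open>(p / q)^2 = of_int D\<close> r by simp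
  hence "r^2 = D" by (simp only: of_int_eq_iff)
  hence "is_unit r" using sq unfolding squarefree_def by simp
  hence "\<bar>r\<bar> = 1" by simp
  hence "r^2 = 1" by (metis power2_abs one_power2)
  thus False using D1 \<open>r^2 = D\<close> by simp
qed

end


lemma F1_int:
  fixes a c g a1 c1 e k r1 q1 r2 q2 :: int
  assumes "a = g*a1" "c = g*c1" "k = c1^2 + c1 - a1*e"
  shows "(r1*a + q1*c)*((r2*a + q2*c)+q2*g) + k*(q1*g)*(-(q2*g))
          = a*g*(r1*r2*a1 + r1*q2*c1 + q1*r2*c1 + r1*q2 + q1*q2*e)"
    and "(r1*a + q1*c)*(-(q2*g)) + (q1*g)*((r2*a + q2*c)+q2*g) + (q1*g)*(-(q2*g))
          = a*g*(q1*r2 - r1*q2)"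
  unfolding assms by (simp_all add: algebra_simps power2_eq_square)

context qf
begin

definition int_ideal :: "qelt set \<Rightarrow> bool" where
  "int_ideal I \<longleftrightarrow> I \<subseteq> OK D \<and> sgrp I \<and> I \<noteq> {0} \<and> (\<forall>r\<in>OK D. \<forall>u\<in>I. kmul D r u \<in> I)"

lemma scal_lc: "kmul D (lc one om q 0) (lc one om s t) = lc one om (q*s) (q*t)"
  by (simp add: mul_lc)

lemma hnf:
  assumes I: "int_ideal I"
  shows "\<exists>a c g a1 c1 e. a > 0 \<and> g > 0 \<and> a = g*a1 \<and> c = g*c1 \<and> k = c1^2 + c1 - a1*e \<and>
           I = {lc one om (r * a + q * c) (q * g) | r q. True}"
proof -
  have IOK: "I \<subseteq> OK D" and Is: "sgrp I" and In0: "I \<noteq> {0}"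
    and Im: "\<And>r u. r \<in> OK D \<Longrightarrow> u \<in> I \<Longrightarrow> kmul D r u \<in> I"
    using I unfolding int_ideal_def by blast+
  have Iadd: "x + y \<in> I" if "x \<in> I" "y \<in> I" for x y using Is that unfolding sgrp_def by blast
  have Idiff: "x - y \<in> I" if "x \<in> I" "y \<in> I" for x y using Is that by (rule sgrp_diff)
  have Iscal: "lc one om (q*s) (q*t) \<in> I" if "lc one om s t \<in> I" for q s t
    using Im[OF OK_lc[of q 0] that] by (simp add: scal_lc)
  have Ilc: "\<exists>u v. x = lc one om u v" if "x \<in> I" for x
    using that IOK unfolding OK_lat lat_def by blast
  obtain z where z: "z \<in> I" "z \<noteq> 0" using In0 Is unfolding sgrp_def by blast
  have "kmul D (kconj z) z \<in> I" using Im[OF OK_conj z(1)] IOK z(1) by blast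
  hence zz: "(knorm D z, 0) \<in> I" by (simp add: kmul_comm kmul_conj_self)
  have "knorm D z \<in> \<int>" using IOK z(1) unfolding OK_def by blast
  then obtain N where N: "knorm D z = of_int N" by (auto elim: Ints_cases)
  have N0: "N \<noteq> 0" using norm_nonzero[OF z(2)] N by simp
  have lcN: "lc one om N 0 \<in> I" using zz N by (simp add: lc_oo)
  define n where "n = \<bar>N\<bar>"
  have n0: "n > 0" using N0 unfolding n_def by simp
  have lcn: "lc one om n 0 \<in> I"
  proof (cases "N \<ge> 0")
    case True thus ?thesis using lcN unfolding n_def by simp
  next
    case False thus ?thesis using Iscal[OF lcN, of "-1"] unfolding n_def by simp
  qed
  have lcn2: "lc one om 0 n \<in> I" using Im[OF OK_lc[of 0 1] lcn] by (simp add: mul_lc)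
  define gn where "gn = (LEAST g::nat. g > 0 \<and> (\<exists>u. lc one om u (int g) \<in> I))"
  define g where "g = int gn"
  have gex: "nat n > 0 \<and> (\<exists>u. lc one om u (int (nat n)) \<in> I)" using n0 lcn2 by auto
  have g: "g > 0 \<and> (\<exists>u. lc one om u g \<in> I)"
    using LeastI[of "\<lambda>g. g > 0 \<and> (\<exists>u. lc one om u (int g) \<in> I)", OF gex]
    unfolding g_def gn_def by simp
  have gle: "g \<le> h" if "h > 0" "lc one om u h \<in> I" for h u
  proof -
    have "nat h > 0 \<and> (\<exists>u. lc one om u (int (nat h)) \<in> I)" using that by auto
    hence "gn \<le> nat h" unfolding gn_def by (rule Least_le)
    thus ?thesis unfolding g_def using that by simp
  qed
  obtain c where c: "lc one om c g \<in> I" using g by blast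
  have gdvd: "g dvd v" if "lc one om u v \<in> I" for u v
  proof -
    have "lc one om u v - lc one om ((v div g) * c) ((v div g) * g) \<in> I"
      using Idiff[OF that Iscal[OF c]] .
    hence m: "lc one om (u - (v div g) * c) (v mod g) \<in> I"
      by (simp add: lc_diff minus_div_mult_eq_mod[symmetric] algebra_simps)
    have "v mod g = 0"
    proof (rule ccontr)
      assume "v mod g \<noteq> 0"
      hence "v mod g > 0" using g by (metis pos_mod_sign order_le_less)
      hence "g \<le> v mod g" using gle m by blast
      thus False using g pos_mod_bound[of g v] by linarith
    qed
    thus ?thesis by (simp add: dvd_eq_mod_eq_0)
  qed
  define an where "an = (LEAST a::nat. a > 0 \<and> lc one om (int a) 0 \<in> I)"
  define a where "a = int an"
  have aex: "nat n > 0 \<and> lc one om (int (nat n)) 0 \<in> I" using n0 lcn by auto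
  have a: "a > 0 \<and> lc one om a 0 \<in> I"
    using LeastI[of "\<lambda>a. a > 0 \<and> lc one om (int a) 0 \<in> I", OF aex]
    unfolding a_def an_def by simp
  have ale: "a \<le> h" if "h > 0" "lc one om h 0 \<in> I" for h
  proof -
    have "nat h > 0 \<and> lc one om (int (nat h)) 0 \<in> I" using that by auto
    hence "an \<le> nat h" unfolding an_def by (rule Least_le)
    thus ?thesis unfolding a_def using that by simp
  qed
  have advd: "a dvd u" if "lc one om u 0 \<in> I" for u
  proof -
    have "lc one om u 0 - lc one om ((u div a) * a) ((u div a) * 0) \<in> I"
      using Idiff[OF that Iscal[of a 0]] a by blast
    hence m: "lc one om (u mod a) 0 \<in> I"
      by (simp add: lc_diff minus_div_mult_eq_mod[symmetric] algebra_simps)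
    have "u mod a = 0"
    proof (rule ccontr)
      assume "u mod a \<noteq> 0"
      hence "u mod a > 0" using a by (metis pos_mod_sign order_le_less)
      hence "a \<le> u mod a" using ale m by blast
      thus False using a pos_mod_bound[of a u] by linarith
    qed
    thus ?thesis by (simp add: dvd_eq_mod_eq_0)
  qed
  have memI: "lc one om u v \<in> I \<longleftrightarrow> (\<exists>r q. u = r * a + q * c \<and> v = q * g)" for u v
  proof
    assume h: "lc one om u v \<in> I"
    obtain q where q: "v = q * g" using gdvd[OF h] by (metis dvd_def mult.commute)
    have "lc one om u v - lc one om (q * c) (q * g) \<in> I" using Idiff[OF h Iscal[OF c]] .
    hence "lc one om (u - q * c) 0 \<in> I" using q by (simp add: lc_diff)
    then obtain r where "u - q * c = r * a" using advd by (metis dvd_def mult.commute)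
    thus "\<exists>r q. u = r * a + q * c \<and> v = q * g" using q by (intro exI[of _ r] exI[of _ q]) simp
  next
    assume "\<exists>r q. u = r * a + q * c \<and> v = q * g"
    then obtain r q where rq: "u = r * a + q * c" "v = q * g" by blast
    have "lc one om (r * a) (r * 0) + lc one om (q * c) (q * g) \<in> I"
      using Iadd[OF Iscal[of a 0 r] Iscal[OF c, of q]] a by blast
    thus "lc one om u v \<in> I" using rq by (simp add: lc_add)
  qed
  have Ieq: "I = {lc one om (r * a + q * c) (q * g) | r q. True}"
  proof (intro set_eqI iffI)
    fix x assume "x \<in> I"
    then obtain u v where x: "x = lc one om u v" using Ilc by blast
    then obtain r q where "u = r * a + q * c" "v = q * g" using memI \<open>x \<in> I\<close> by blast
    thus "x \<in> {lc one om (r * a + q * c) (q * g) | r q. True}" using x by blast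
  next
    fix x assume "x \<in> {lc one om (r * a + q * c) (q * g) | r q. True}"
    thus "x \<in> I" using memI by blast
  qed
  have "lc one om 0 a \<in> I" using Im[OF OK_lc[of 0 1] conjunct2[OF a]] by (simp add: mul_lc)
  then obtain r q where rq: "0 = r * a + q * c" "a = q * g" using memI by blast
  have "lc one om (k * g) (c + g) \<in> I" using Im[OF OK_lc[of 0 1] c] by (simp add: mul_lc)
  then obtain r' q' where rq': "k * g = r' * a + q' * c" "c + g = q' * g" using memI by blast
  have q0: "q \<noteq> 0" using rq(2) a by auto
  have "q * c = q * (- r * g)" using rq by (simp add: algebra_simps)
  hence "c = - r * g" using q0 by (metis mult_cancel_left)
  hence cg: "c = g * (- r)" by simp
  have "q' * g = (- r + 1) * g" using rq'(2) cg by (simp add: algebra_simps)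
  hence q': "q' = - r + 1" using g by simp
  have "k * g = (r' * q + q' * (- r)) * g" using rq'(1) rq(2) cg by (simp add: algebra_simps)
  hence "k = r' * q + q' * (- r)" using g by simp
  hence ke: "k = (- r)^2 + (- r) - q * (- r')" using q' by (simp add: algebra_simps power2_eq_square)
  show ?thesis
    by (rule exI[of _ a], rule exI[of _ c], rule exI[of _ g], rule exI[of _ q], rule exI[of _ "-r"],
        rule exI[of _ "-r'"]) (use a g rq(2) cg ke Ieq in \<open>simp add: mult.commute\<close>)
qed

end


lemma kscale_lc: "kscale s (lc e1 e2 u v) = lc (kscale s e1) (kscale s e2) u v"
  by (simp add: lc_eq kscale_def algebra_simps)

lemma kscale_lat: "kscale s ` lat e1 e2 = lat (kscale s e1) (kscale s e2)"
proof (intro set_eqI iffI)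
  fix x assume "x \<in> kscale s ` lat e1 e2"
  then obtain u v where "x = kscale s (lc e1 e2 u v)" unfolding lat_def by blast
  thus "x \<in> lat (kscale s e1) (kscale s e2)" by (simp add: kscale_lc)
next
  fix x assume "x \<in> lat (kscale s e1) (kscale s e2)"
  then obtain u v where "x = lc (kscale s e1) (kscale s e2) u v" unfolding lat_def by blast
  hence "x = kscale s (lc e1 e2 u v)" by (simp add: kscale_lc)
  thus "x \<in> kscale s ` lat e1 e2" by simp
qed

lemma det2_kscale: "det2 (kscale s e1) (kscale s e2) = s^2 * det2 e1 e2"
  by (simp add: det2_def kscale_def power2_eq_square algebra_simps)

lemma kscale_kscale: "kscale s (kscale t x) = kscale (s * t) x"
  by (simp add: kscale_def)
lemma kscale_one[simp]: "kscale 1 x = x"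
  by (simp add: kscale_def)
lemma kscale_add: "kscale s (x + y) = kscale s x + kscale s y"
  by (simp add: kscale_def algebra_simps)
lemma kscale_uminus: "kscale s (- x) = - kscale s x"
  by (simp add: kscale_def)
lemma kscale_zero: "kscale s 0 = 0"
  by (simp add: kscale_def zero_prod_def)
lemma kscale_eq0: "kscale s x = 0 \<longleftrightarrow> s = 0 \<or> x = 0"
  by (cases x) (auto simp: kscale_def zero_prod_def)

context qf
begin

lemma ideal_consequences:
  assumes "int_ideal I"
  shows "\<exists>n e1 e2. n > 0 \<and> card (cosets (OK D) I) = nat n \<and> I = lat e1 e2 \<and> det2 e1 e2 \<noteq> 0 \<and>
          (\<forall>y\<in>I. \<forall>z\<in>I. \<exists>X Y. kmul D y (kconj z) = lc one om (n*X) (n*Y))"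
proof -
  obtain a c g a1 c1 e where pa: "a > 0" "g > 0" "a = g*a1" "c = g*c1" "k = c1^2 + c1 - a1*e"
    and Ieq: "I = {lc one om (r * a + q * c) (q * g) | r q. True}"
    using hnf[OF assms] by blast
  define e1 where "e1 = kscale (of_int a) one"
  define e2 where "e2 = kscale (of_int c) one + kscale (of_int g) om"
  have Il: "I = lat e1 e2" unfolding Ieq e1_def e2_def lat_tri ..
  have dd: "det2 e1 e2 = of_int (a * g) / 2" unfolding e1_def e2_def det2_def kscale_def by simp
  have "a * g \<noteq> 0" using pa(1,2) by simp
  hence d: "det2 e1 e2 \<noteq> 0" using dd by (metis divide_eq_0_iff of_int_eq_0_iff zero_neq_numeral)
  have card: "card (cosets (OK D) I) = nat (a * g)"
    unfolding OK_lat Ieq lat_tri[symmetric] by (rule tri_index[OF det_one_om pa(1,2)])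
  have F1: "\<exists>X Y. kmul D y (kconj z) = lc one om (a*g*X) (a*g*Y)" if yI: "y \<in> I" and zI: "z \<in> I" for y z
  proof -
    obtain r1 q1 where y: "y = lc one om (r1 * a + q1 * c) (q1 * g)" using yI Ieq by blast
    obtain r2 q2 where z: "z = lc one om (r2 * a + q2 * c) (q2 * g)" using zI Ieq by blast
    have "kmul D y (kconj z) = lc one om
      ((r1*a + q1*c)*((r2*a + q2*c)+q2*g) + k*(q1*g)*(-(q2*g)))
      ((r1*a + q1*c)*(-(q2*g)) + (q1*g)*((r2*a + q2*c)+q2*g) + (q1*g)*(-(q2*g)))"
      unfolding y z conj_lc mul_lc by simp
    also have "\<dots> = lc one om (a*g*(r1*r2*a1 + r1*q2*c1 + q1*r2*c1 + r1*q2 + q1*q2*e))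
                               (a*g*(q1*r2 - r1*q2))"
      using F1_int[OF pa(3,4,5)] by simp
    finally show ?thesis by blast
  qed
  show ?thesis
    by (rule exI[of _ "a*g"], rule exI[of _ e1], rule exI[of _ e2]) (use pa card Il d F1 in simp)
qed

lemma frac_props:
  assumes A: "frac_ideal D A"
  shows "\<exists>f1 f2. ideal_norm D A > 0 \<and> A = lat f1 f2 \<and> det2 f1 f2 \<noteq> 0 \<and>
          (\<forall>y\<in>A. \<forall>z\<in>A. \<exists>X Y. kmul D y (kconj z) = kscale (ideal_norm D A) (lc one om X Y))"
proof -
  have A0: "0 \<in> A" and An0: "A \<noteq> {0}" and Aadd: "\<And>u v. u \<in> A \<Longrightarrow> v \<in> A \<Longrightarrow> u + v \<in> A"
    and Am: "\<And>r u. r \<in> OK D \<Longrightarrow> u \<in> A \<Longrightarrow> kmul D r u \<in> A"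
    and dex: "\<exists>d::nat. d > 0 \<and> kscale (of_nat d) ` A \<subseteq> OK D"
    using A unfolding frac_ideal_def by blast+
  define d0 where "d0 = (LEAST d::nat. d > 0 \<and> kscale (of_nat d) ` A \<subseteq> OK D)"
  have d0: "d0 > 0 \<and> kscale (of_nat d0) ` A \<subseteq> OK D"
    unfolding d0_def using dex by (rule LeastI_ex)
  define I where "I = kscale (of_nat d0) ` A"
  have neg1: "kmul D (lc one om (-1) 0) x = - x" for x
    by (cases x) (simp add: lc_oo kmul_def)
  have Aneg: "- u \<in> A" if "u \<in> A" for u using Am[OF OK_lc[of "-1" 0] that] neg1 by simp
  have "int_ideal I"
    unfolding int_ideal_def
  proof (intro conjI)
    show "I \<subseteq> OK D" using d0 unfolding I_def by blast
    show "sgrp I" unfolding sgrp_def I_def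
    proof (intro conjI ballI)
      show "0 \<in> kscale (of_nat d0) ` A" using A0 kscale_zero by (metis image_eqI)
    next
      fix x y assume "x \<in> kscale (of_nat d0) ` A" "y \<in> kscale (of_nat d0) ` A"
      then obtain u v where "u \<in> A" "v \<in> A" "x = kscale (of_nat d0) u" "y = kscale (of_nat d0) v" by blast
      thus "x + y \<in> kscale (of_nat d0) ` A" using Aadd by (metis image_eqI kscale_add)
    next
      fix x assume "x \<in> kscale (of_nat d0) ` A"
      then obtain u where "u \<in> A" "x = kscale (of_nat d0) u" by blast
      thus "- x \<in> kscale (of_nat d0) ` A" using Aneg by (metis image_eqI kscale_uminus)
    qed
    show "I \<noteq> {0}"
    proof
      assume "I = {0}"
      obtain u where "u \<in> A" "u \<noteq> 0" using An0 A0 by blast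
      hence "kscale (of_nat d0) u \<in> I" "kscale (of_nat d0) u \<noteq> 0" using d0 unfolding I_def
        by (auto simp: kscale_eq0)
      thus False using \<open>I = {0}\<close> by blast
    qed
    show "\<forall>r\<in>OK D. \<forall>u\<in>I. kmul D r u \<in> I" unfolding I_def
      using Am by (auto simp: kmul_scale2)
  qed
  from ideal_consequences[OF this] obtain n e1 e2 where n: "n > 0" and card: "card (cosets (OK D) I) = nat n"
    and Il: "I = lat e1 e2" and d: "det2 e1 e2 \<noteq> 0"
    and F1': "\<forall>y\<in>I. \<forall>z\<in>I. \<exists>X Y. kmul D y (kconj z) = lc one om (n*X) (n*Y)"
    by blast
  have F1: "\<exists>X Y. kmul D y (kconj z) = lc one om (n*X) (n*Y)" if "y \<in> I" "z \<in> I" for y z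
    using F1' that by blast
  have NA: "ideal_norm D A = of_int n / of_nat d0 ^ 2"
    unfolding ideal_norm_def Let_def d0_def[symmetric] I_def[symmetric] card using n by simp
  have NA0: "ideal_norm D A > 0" unfolding NA using n d0 by simp
  define s :: rat where "s = 1 / of_nat d0"
  have AI: "A = kscale s ` I"
    unfolding I_def s_def image_image kscale_kscale using d0 by simp
  have Al: "A = lat (kscale s e1) (kscale s e2)" unfolding AI Il kscale_lat ..
  have dA: "det2 (kscale s e1) (kscale s e2) \<noteq> 0" unfolding det2_kscale using d d0 s_def by simp
  have F1A: "\<exists>X Y. kmul D y (kconj z) = kscale (ideal_norm D A) (lc one om X Y)" if "y \<in> A" "z \<in> A" for y z
  proof -
    have "kscale (of_nat d0) y \<in> I" "kscale (of_nat d0) z \<in> I" using that unfolding I_def by auto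
    then obtain X Y where XY: "kmul D (kscale (of_nat d0) y) (kconj (kscale (of_nat d0) z)) = lc one om (n*X) (n*Y)"
      using F1 by blast
    have cs: "kconj (kscale t w) = kscale t (kconj w)" for t w by (simp add: kconj_def kscale_def)
    have "kscale (of_nat d0 ^ 2) (kmul D y (kconj z)) = kscale (of_int n) (lc one om X Y)"
      using XY unfolding cs kmul_scale kmul_scale2 kscale_kscale
      by (simp add: power2_eq_square lc_oo kscale_def field_simps)
    hence "kscale (1 / of_nat d0 ^ 2) (kscale (of_nat d0 ^ 2) (kmul D y (kconj z)))
         = kscale (1 / of_nat d0 ^ 2) (kscale (of_int n) (lc one om X Y))" by simp
    hence "kmul D y (kconj z) = kscale (ideal_norm D A) (lc one om X Y)"
      unfolding kscale_kscale NA using d0 by simp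
    thus ?thesis by blast
  qed
  show ?thesis using NA0 Al dA F1A by blast
qed

end


lemma trans_card:
  fixes f :: "qelt \<Rightarrow> qelt"
  assumes add: "\<And>x y. f (x + y) = f x + f y" and inj: "inj f"
  shows "card ((\<lambda>x. (\<lambda>y. x + y) ` (f ` H)) ` (f ` P)) = card ((\<lambda>x. (\<lambda>y. x + y) ` H) ` P)"
proof -
  have "(\<lambda>x. (\<lambda>y. x + y) ` (f ` H)) ` (f ` P) = (\<lambda>S. f ` S) ` ((\<lambda>x. (\<lambda>y. x + y) ` H) ` P)"
    unfolding image_image by (simp add: add)
  moreover have "inj_on (\<lambda>S. f ` S) X" for X
    by (rule inj_onI) (use inj_image_eq_iff[OF inj] in blast)
  ultimately show ?thesis by (simp add: card_image)
qed

context qf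
begin

abbreviation phi :: "qelt \<Rightarrow> qelt" where "phi x \<equiv> kmul D (0, 1) x"

lemma phi_eq: "phi x = (of_int D * snd x, fst x)"
  by (simp add: kmul_def)
lemma phi_add: "phi (x + y) = phi x + phi y" by (rule kmul_add)
lemma phi_inj: "inj phi"
proof (rule injI)
  fix x y assume "phi x = phi y"
  hence "of_int D * snd x = of_int D * snd y" "fst x = fst y" unfolding phi_eq by simp_all
  thus "x = y" using D1 by (simp add: prod_eq_iff)
qed
lemma phi_phi: "phi (phi x) = kscale (of_int D) x"
  by (simp add: phi_eq kscale_def)
lemma sqrtD_OK: "(0, 1) \<in> OK D"
proof -
  have "(0::rat, 1::rat) = lc one om (-1) 2" by (simp add: lc_oo)
  thus ?thesis by simp
qed
lemma phi_lc: "phi (lc e1 e2 s t) = lc (phi e1) (phi e2) s t"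
  unfolding lc_def kmul_add kmul_scale2 ..
lemma phi_lat: "phi ` lat e1 e2 = lat (phi e1) (phi e2)"
proof (intro set_eqI iffI)
  fix x assume "x \<in> phi ` lat e1 e2"
  then obtain u v where "x = phi (lc e1 e2 u v)" unfolding lat_def by blast
  thus "x \<in> lat (phi e1) (phi e2)" by (simp add: phi_lc)
next
  fix x assume "x \<in> lat (phi e1) (phi e2)"
  then obtain u v where "x = lc (phi e1) (phi e2) u v" unfolding lat_def by blast
  hence "x = phi (lc e1 e2 u v)" by (simp add: phi_lc)
  thus "x \<in> phi ` lat e1 e2" using lat_mem[of e1 e2 u v] by blast
qed

lemma index_phi:
  assumes A: "frac_ideal D A"
  shows "card (cosets A (phi ` A)) = nat D"
proof -
  obtain f1 f2 where Al: "A = lat f1 f2" and d: "det2 f1 f2 \<noteq> 0"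
    using frac_props[OF A] by blast
  have Am: "\<And>r u. r \<in> OK D \<Longrightarrow> u \<in> A \<Longrightarrow> kmul D r u \<in> A"
    using A unfolding frac_ideal_def by blast
  have sA: "sgrp A" unfolding Al by (rule lat_sgrp)
  have sP: "sgrp (phi ` A)" unfolding Al phi_lat by (rule lat_sgrp)
  have DAl: "kscale (of_int D) ` A = lat (kscale (of_int D) f1) (kscale (of_int 0) f1 + kscale (of_int D) f2)"
    unfolding Al kscale_lat by (simp add: kscale_def zero_prod_def)
  have sD: "sgrp (kscale (of_int D) ` A)" unfolding DAl by (rule lat_sgrp)
  have PA: "phi ` A \<subseteq> A" using Am[OF sqrtD_OK] by blast
  have DPP: "kscale (of_int D) ` A = phi ` phi ` A" unfolding image_image phi_phi ..
  have DP: "kscale (of_int D) ` A \<subseteq> phi ` A" unfolding DPP using PA by blast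
  have c1: "card (cosets A (kscale (of_int D) ` A)) = nat (D * D)"
    unfolding DAl unfolding Al by (rule tri_index[OF d]) (use D1 in auto)
  have c2: "card (cosets (phi ` A) (kscale (of_int D) ` A)) = card (cosets A (phi ` A))"
    unfolding DPP cosets_def by (rule trans_card[OF phi_add phi_inj])
  have "card (cosets A (kscale (of_int D) ` A)) = card (cosets (phi ` A) (kscale (of_int D) ` A)) * card (cosets A (phi ` A))"
    by (rule tower[OF sA sP sD DP PA])
  hence "card (cosets A (phi ` A)) ^ 2 = nat D ^ 2" unfolding c1 c2 using D1
    by (simp add: power2_eq_square nat_mult_distrib)
  thus ?thesis by (simp add: power2_eq_iff_nonneg)
qed

end


context qf
begin

abbreviation psi :: "qelt \<Rightarrow> qelt" where "psi x \<equiv> kmul D (0, 1 / of_int D) x"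

lemma psi_eq: "psi x = (snd x, fst x / of_int D)"
  using D1 by (simp add: kmul_def)
lemma phi_psi: "phi (psi x) = x" using D1 by (simp add: psi_eq phi_eq)
lemma psi_phi: "psi (phi x) = x" using D1 by (simp add: psi_eq phi_eq)
lemma psi_add: "psi (x + y) = psi x + psi y" by (rule kmul_add)
lemma psi_inj: "inj psi" by (metis injI phi_psi)

lemma inv_diff_iff: "x \<in> inv_different D \<longleftrightarrow> phi x \<in> OK D"
proof
  assume "x \<in> inv_different D"
  moreover have "phi one \<in> different D" unfolding different_def using OK_lc[of 1 0] by (simp add: lc_oo)
  ultimately have "kmul D x (phi one) \<in> OK D" unfolding inv_different_def by blast
  moreover have "kmul D x (phi one) = phi x" by (simp add: kmul_def)
  ultimately show "phi x \<in> OK D" by simp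
next
  assume h: "phi x \<in> OK D"
  show "x \<in> inv_different D" unfolding inv_different_def different_def
  proof (intro CollectI ballI)
    fix y assume "y \<in> phi ` OK D"
    then obtain u where u: "u \<in> OK D" "y = phi u" by blast
    have "kmul D x y = kmul D (phi x) u" unfolding u(2) by (metis kmul_assoc kmul_comm)
    thus "kmul D x y \<in> OK D" using OK_mul[OF h u(1)] by simp
  qed
qed

lemma ideal_mult_psi:
  assumes A: "frac_ideal D A"
  shows "ideal_mult D A (inv_different D) = psi ` A"
proof -
  have A0: "0 \<in> A" and Aadd: "\<And>u v. u \<in> A \<Longrightarrow> v \<in> A \<Longrightarrow> u + v \<in> A"
    and Am: "\<And>r u. r \<in> OK D \<Longrightarrow> u \<in> A \<Longrightarrow> kmul D r u \<in> A"
    using A unfolding frac_ideal_def by blast+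
  have phi0: "phi 0 = 0" by (simp add: phi_eq zero_prod_def)
  have key: "(\<forall>i<n. f i \<in> A \<and> g i \<in> inv_different D) \<longrightarrow> phi (\<Sum>i<n. kmul D (f i) (g i)) \<in> A"
    for n :: nat and f g
  proof (induction n)
    case 0 show ?case using A0 phi0 by simp
  next
    case (Suc n)
    show ?case
    proof
      assume h: "\<forall>i<Suc n. f i \<in> A \<and> g i \<in> inv_different D"
      have "phi (\<Sum>i<n. kmul D (f i) (g i)) \<in> A" using Suc h by simp
      moreover have "phi (kmul D (f n) (g n)) = kmul D (phi (g n)) (f n)"
        by (metis kmul_assoc kmul_comm)
      moreover have "phi (g n) \<in> OK D" using h inv_diff_iff by blast
      ultimately have "phi (\<Sum>i<n. kmul D (f i) (g i)) + phi (kmul D (f n) (g n)) \<in> A"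
        using Aadd Am h by simp
      thus "phi (\<Sum>i<Suc n. kmul D (f i) (g i)) \<in> A" by (simp add: phi_add)
    qed
  qed
  show ?thesis
  proof (intro set_eqI iffI)
    fix x assume "x \<in> ideal_mult D A (inv_different D)"
    then obtain n :: nat and f g where h: "\<forall>i<n. f i \<in> A \<and> g i \<in> inv_different D"
      and x: "x = (\<Sum>i<n. kmul D (f i) (g i))" unfolding ideal_mult_def by blast
    have "phi x \<in> A" using key h x by blast
    moreover have "x = psi (phi x)" by (simp add: psi_phi)
    ultimately show "x \<in> psi ` A" by blast
  next
    fix x assume "x \<in> psi ` A"
    then obtain y where y: "y \<in> A" "x = psi y" by blast
    have "phi (0, 1 / of_int D) = one" using D1 by (simp add: phi_eq)
    hence "(0, 1 / of_int D) \<in> inv_different D" unfolding inv_diff_iff using OK_lc[of 1 0]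
      by (simp add: lc_oo)
    moreover have "x = (\<Sum>i<Suc 0. kmul D ((\<lambda>_. y) i) ((\<lambda>_. (0, 1 / of_int D)) i))"
      using y by (simp add: kmul_comm)
    ultimately show "x \<in> ideal_mult D A (inv_different D)" unfolding ideal_mult_def using y(1)
      by (intro CollectI exI[of _ "Suc 0"] exI[of _ "\<lambda>_. y"] exI[of _ "\<lambda>_. (0, 1 / of_int D)"]) simp
  qed
qed

lemma knorm_psi: "knorm D (psi y) = - knorm D y / of_int D"
  using D1 by (simp add: psi_eq knorm_eq field_simps power2_eq_square)

lemma cond_psi:
  assumes "NA \<noteq> 0" "b \<ge> 1"
  shows "rat_cong (knorm D (psi y) / NA) (- of_int m / of_int D) (int b)
     \<longleftrightarrow> rat_cong (knorm D y / NA) (of_int m) (int b * D)"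
proof -
  have D0: "(of_int D :: rat) \<noteq> 0" using D1 by simp
  have e: "knorm D (psi y) / NA - (- of_int m / of_int D) = - (knorm D y / NA - of_int m) / of_int D"
    unfolding knorm_psi using D0 by (simp add: field_simps)
  show ?thesis unfolding rat_cong_def e
  proof
    assume "\<exists>j. - (knorm D y / NA - of_int m) / of_int D = of_int (int b) * of_int j"
    then obtain j where "- (knorm D y / NA - of_int m) / of_int D = of_int (int b) * of_int j" by blast
    hence "knorm D y / NA - of_int m = of_int (int b * D) * of_int (- j)" using D0 by (simp add: field_simps)
    thus "\<exists>j. knorm D y / NA - of_int m = of_int (int b * D) * of_int j" by blast
  next
    assume "\<exists>j. knorm D y / NA - of_int m = of_int (int b * D) * of_int j"
    then obtain j where "knorm D y / NA - of_int m = of_int (int b * D) * of_int j" by blast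
    hence "- (knorm D y / NA - of_int m) / of_int D = of_int (int b) * of_int (- j)" using D0 by (simp add: field_simps)
    thus "\<exists>j. - (knorm D y / NA - of_int m) / of_int D = of_int (int b) * of_int j" by blast
  qed
qed

end


context qf
begin

lemma norm_shift:
  "knorm D (y + kscale s (phi w)) = knorm D y - 2 * s * of_int D * snd (kmul D y (kconj w))
     - s^2 * of_int D * knorm D w"
  by (cases y, cases w) (simp add: knorm_eq phi_eq kmul_def kconj_def kscale_def algebra_simps power2_eq_square)

lemma wd:
  assumes A: "frac_ideal D A" and y: "y \<in> A" and w: "w \<in> A"
    and c: "rat_cong (knorm D y / ideal_norm D A) (of_int m) B"
    and B: "B = int b * D"
  shows "rat_cong (knorm D (y + kscale (of_nat b) (phi w)) / ideal_norm D A) (of_int m) B"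
proof -
  define NA where "NA = ideal_norm D A"
  obtain f1 f2 where NA0: "NA > 0" and
    F1: "\<forall>y\<in>A. \<forall>z\<in>A. \<exists>X Y. kmul D y (kconj z) = kscale NA (lc one om X Y)"
    using frac_props[OF A] unfolding NA_def by blast
  obtain X Y where XY: "kmul D y (kconj w) = kscale NA (lc one om X Y)" using F1 y w by blast
  obtain X' Y' where XY': "kmul D w (kconj w) = kscale NA (lc one om X' Y')" using F1 w by blast
  have "(knorm D w, 0) = kscale NA (lc one om X' Y')" using XY' kmul_conj_self by simp
  hence e1: "knorm D w = NA * (of_int X' + of_int Y' / 2)" and e2: "0 = NA * (of_int Y' / 2)"
    by (simp_all add: kscale_def lc_oo)
  hence "Y' = 0" using NA0 by simp
  hence kw: "knorm D w = NA * of_int X'" using e1 by simp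
  have sy: "snd (kmul D y (kconj w)) = NA * (of_int Y / 2)" using XY by (simp add: kscale_def lc_oo)
  obtain j where j: "knorm D y / NA - of_int m = of_int B * of_int j" using c unfolding rat_cong_def NA_def by blast
  have "knorm D (y + kscale (of_nat b) (phi w)) / NA - of_int m
      = (knorm D y / NA - of_int m) - of_int B * of_int (Y + int b * X')"
    unfolding norm_shift sy kw B using NA0 by (simp add: field_simps power2_eq_square)
  also have "\<dots> = of_int B * of_int (j - (Y + int b * X'))" unfolding j by (simp add: algebra_simps)
  finally show ?thesis unfolding rat_cong_def NA_def by blast
qed

end

theorem mainTheorem1:
  fixes D :: int and b :: nat and A :: "qelt set" and m :: int
  assumes "D > 1" and "D mod 4 = 1" and "squarefree D"
    and "b \<ge> 1" and "frac_ideal D A"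
  shows "real (G_sum D b A m) = real (N_count D (b * nat D) A m) / real_of_int D"
proof -
  interpret qf D using assms(1-3) by unfold_locales
  note A = assms(5)
  define NA where "NA = ideal_norm D A"
  obtain f1 f2 where NA0: "NA > 0" and Al: "A = lat f1 f2"
    using frac_props[OF A] unfolding NA_def by blast
  have Am: "\<And>r u. r \<in> OK D \<Longrightarrow> u \<in> A \<Longrightarrow> kmul D r u \<in> A"
    using A unfolding frac_ideal_def by blast
  define sb where "sb = kscale (of_nat b)"
  have sb_add: "\<And>x y. sb (x + y) = sb x + sb y" unfolding sb_def by (rule kscale_add)
  have sb_inj: "inj sb"
  proof (rule injI)
    fix x y assume "sb x = sb y"
    hence "kscale (1 / of_nat b) (sb x) = kscale (1 / of_nat b) (sb y)" by simp
    thus "x = y" unfolding sb_def kscale_kscale using assms(4) by simp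
  qed
  have sbA: "sb u \<in> A" if "u \<in> A" for u
  proof -
    have "kmul D (lc one om (int b) 0) u = sb u" unfolding sb_def by (cases u) (simp add: lc_oo kmul_def kscale_def)
    thus ?thesis using Am[OF OK_lc[of "int b" 0] that] by simp
  qed
  have psi_sb: "psi (sb x) = sb (psi x)" for x unfolding sb_def by (rule kmul_scale2)
  have phi_sb: "phi (sb x) = sb (phi x)" for x unfolding sb_def by (rule kmul_scale2)
  define P where "P = {y \<in> A. rat_cong (knorm D y / NA) (of_int m) (int b * D)}"
  define H' where "H' = sb ` phi ` A"
  define H where "H = sb ` phi ` phi ` A"
  have S1: "{l \<in> ideal_mult D A (inv_different D).
          rat_cong (knorm D l / ideal_norm D A) (- of_int m / of_int D) (int b)} = psi ` P"
    unfolding ideal_mult_psi[OF A] P_def NA_def[symmetric]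
    using cond_psi[where NA=NA and b=b and m=m] NA0 assms(4) by auto
  have S2: "kscale (of_nat b) ` A = psi ` H'"
  proof -
    have "psi (sb (phi x)) = sb x" for x unfolding psi_sb psi_phi by (rule refl)
    hence "psi ` H' = sb ` A" unfolding H'_def image_image by simp
    thus ?thesis unfolding sb_def by simp
  qed
  have G: "G_sum D b A m = card ((\<lambda>x. (\<lambda>y. x + y) ` H') ` P)"
    unfolding G_sum_def S1 S2 by (rule trans_card[OF psi_add psi_inj])
  have HH: "kscale (of_nat (b * nat D)) ` A = H"
  proof -
    have "kscale (of_nat (b * nat D)) x = sb (phi (phi x))" for x
      unfolding sb_def phi_phi kscale_kscale using assms(1) by simp
    thus ?thesis unfolding H_def image_image by simp
  qed
  have PP: "{l \<in> A. rat_cong (knorm D l / ideal_norm D A) (of_int m) (int (b * nat D))} = P"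
    unfolding P_def NA_def using assms(1) by simp
  have N: "N_count D (b * nat D) A m = card ((\<lambda>x. (\<lambda>y. x + y) ` H) ` P)"
    unfolding N_count_def HH PP ..
  have sH': "sgrp H'" unfolding H'_def Al phi_lat sb_def kscale_lat by (rule lat_sgrp)
  have sH: "sgrp H" unfolding H_def Al phi_lat sb_def kscale_lat by (rule lat_sgrp)
  have PA: "phi ` A \<subseteq> A" using Am[OF sqrtD_OK] by blast
  have HH': "H \<subseteq> H'" unfolding H_def H'_def using PA by blast
  have Pc: "x + g \<in> P" if xP: "x \<in> P" and gH: "g \<in> H'" for x g
  proof -
    obtain w where w: "w \<in> A" "g = sb (phi w)" using gH unfolding H'_def by blast
    have "g \<in> A" using w PA sbA by blast
    hence "x + g \<in> A" using xP A unfolding P_def frac_ideal_def by blast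
    moreover have "rat_cong (knorm D (x + g) / NA) (of_int m) (int b * D)"
      using wd[OF A _ w(1), of x m "int b * D" b] xP unfolding P_def NA_def w(2) sb_def by blast
    ultimately show ?thesis unfolding P_def by blast
  qed
  have card_c: "card (cosets H' H) = nat D"
  proof -
    have "card (cosets H' H) = card (cosets (phi ` A) (phi ` phi ` A))"
      unfolding cosets_def H_def H'_def by (rule trans_card[OF sb_add sb_inj])
    also have "\<dots> = card (cosets A (phi ` A))"
      unfolding cosets_def by (rule trans_card[OF phi_add phi_inj])
    also have "\<dots> = nat D" by (rule index_phi[OF A])
    finally show ?thesis .
  qed
  have "N_count D (b * nat D) A m = nat D * G_sum D b A m"
    unfolding N G using gen_fiber[OF sH' sH HH' Pc] card_c by simp
  thus ?thesis using assms(1) by simp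
qed


end
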